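(* Let $n\ge 2$ be even. Consider the generalized $n$-gene repressilator system $$\dot r_i = a_i(p_{i-1}) - d_{r_i}(r_i),\qquad \dot p_i = k_i(r_i) - d_{p_i}(p_i),\qquad i=1,\dots,n,$$ (indices mod $n$), with functions satisfying the standing assumptions in the context. Assume $\alpha_i:=\lim_{x\to\infty}a_i(x)>0$ for all $i$, and that for all $i$, $\delta_i^R > a_i(0)$ and $\delta_i^P > k_i(d_{r_i}^{-1}(a_i(0)))$, where $\delta_i^R:=\lim_{x\to\infty} d_{r_i}(x)$ and $\delta_i^P:=\lim_{x\to\infty} d_{p_i}(x)$ (possibly $+\infty$). Then the central steady state $E_C$ exists and is a steady state: for each $i$ the fixed-point equation $p_i = f_i\circ f_{i-1}\circ\cdots\circ f_1\circ f_n\circ\cdots\circ f_{i+1}(p_i)$ has a positive solution, and there are such solutions $p_1^*,\dots,p_n^*>0$ for which $$E_C=\big(d_{r_1}^{-1}(a_1(p_n^* )),\dots,d_{r_n}^{-1}(a_n(p_{n-1}^* )),\,p_1^*,\dots,p_n^*\big)$$ is a steady state.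
   Context: Standing assumptions: each $a_i:[0,\infty)\to\mathbb{R}$ is $C^1$, nonnegative, strictly decreasing, with $a_i(0)>0$. Each $d_{r_i}, d_{p_i}, k_i:[0,\infty)\to\mathbb{R}$ is $C^1$, vanishes at $0$, and is strictly increasing on $(0,\infty)$. Define $f_i := d_{p_i}^{-1}\circ k_i\circ d_{r_i}^{-1}\circ a_i$. *)

theory Defs
  imports "HOL-Analysis.Analysis" "HOL-Library.Extended_Real"
begin

text \<open>Genes are indexed by 0, ..., n-1 (paper's 1..n shifted by one); indices are taken mod n.\<close>

definition C1_nonneg :: "(real \<Rightarrow> real) \<Rightarrow> bool" where
  "C1_nonneg g \<longleftrightarrow> (\<exists>g'. continuous_on {0..} g' \<and>
      (\<forall>x\<ge>0. (g has_real_derivative g' x) (at x within {0..})))"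

definition repression_fun :: "(real \<Rightarrow> real) \<Rightarrow> bool" where
  "repression_fun a \<longleftrightarrow> C1_nonneg a \<and> (\<forall>x\<ge>0. a x \<ge> 0) \<and>
      (\<forall>x y. 0 \<le> x \<longrightarrow> x < y \<longrightarrow> a y < a x) \<and> a 0 > 0"

definition rate_fun :: "(real \<Rightarrow> real) \<Rightarrow> bool" where
  "rate_fun d \<longleftrightarrow> C1_nonneg d \<and> d 0 = 0 \<and> strict_mono_on {0<..} d"

definition inv0 :: "(real \<Rightarrow> real) \<Rightarrow> real \<Rightarrow> real" where
  "inv0 g = the_inv_into {0..} g"

definition fmap :: "(nat \<Rightarrow> real \<Rightarrow> real) \<Rightarrow> (nat \<Rightarrow> real \<Rightarrow> real) \<Rightarrow> (nat \<Rightarrow> real \<Rightarrow> real)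
    \<Rightarrow> (nat \<Rightarrow> real \<Rightarrow> real) \<Rightarrow> nat \<Rightarrow> real \<Rightarrow> real" where
  "fmap a dr dp k i = inv0 (dp i) \<circ> k i \<circ> inv0 (dr i) \<circ> a i"

fun comp_steps :: "(nat \<Rightarrow> real \<Rightarrow> real) \<Rightarrow> nat \<Rightarrow> nat \<Rightarrow> nat \<Rightarrow> real \<Rightarrow> real" where
  "comp_steps f n i 0 x = x"
| "comp_steps f n i (Suc m) x = f ((i + Suc m) mod n) (comp_steps f n i m x)"

text \<open>cyc_comp f n i = f_i o f_{i-1} o ... o f_{i+1} (full cycle of length n ending in f_i).\<close>
definition cyc_comp :: "(nat \<Rightarrow> real \<Rightarrow> real) \<Rightarrow> nat \<Rightarrow> nat \<Rightarrow> real \<Rightarrow> real" where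
  "cyc_comp f n i = comp_steps f n i n"

definition prev :: "nat \<Rightarrow> nat \<Rightarrow> nat" where
  "prev n i = (i + n - 1) mod n"

definition steady_state :: "nat \<Rightarrow> (nat \<Rightarrow> real \<Rightarrow> real) \<Rightarrow> (nat \<Rightarrow> real \<Rightarrow> real) \<Rightarrow> (nat \<Rightarrow> real \<Rightarrow> real)
    \<Rightarrow> (nat \<Rightarrow> real \<Rightarrow> real) \<Rightarrow> (nat \<Rightarrow> real) \<Rightarrow> (nat \<Rightarrow> real) \<Rightarrow> bool" where
  "steady_state n a dr dp k r p \<longleftrightarrow> (\<forall>i<n. r i \<ge> 0 \<and> p i \<ge> 0 \<and>
      a i (p (prev n i)) - dr i (r i) = 0 \<and> k i (r i) - dp i (p i) = 0)"

end

theory Submission imports Defs begin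

lemma C1_cont: "C1_nonneg d \<Longrightarrow> continuous_on {0..} d"
  unfolding C1_nonneg_def continuous_on_eq_continuous_within
  by (auto intro: DERIV_continuous)

lemma rate_pos:
  assumes "rate_fun d" "x > 0" shows "d x > 0"
proof (rule ccontr)
  assume "\<not> d x > 0"
  have c: "continuous_on {0..x/2} d" using C1_cont assms(1) unfolding rate_fun_def
    by (meson atLeastAtMost_iff atLeast_iff continuous_on_subset subsetI)
  have sm: "strict_mono_on {0<..} d" "d 0 = 0" using assms(1) unfolding rate_fun_def by auto
  have h: "d (x/2) < d x" using sm assms(2) by (auto simp: strict_mono_on_def)
  then have "d (x/2) < 0" using \<open>\<not> d x > 0\<close> by linarith
  then obtain t where t: "t \<ge> 0" "t \<le> x/2" "d t = d (x/2) / 2"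
    using IVT2'[of d "x/2" "d (x/2) / 2" 0] c sm assms(2) by auto
  have "t \<noteq> 0" using t sm \<open>d (x/2) < 0\<close> by auto
  moreover have "t \<noteq> x/2" using t \<open>d (x/2) < 0\<close> by auto
  ultimately have "d t < d (x/2)" using sm t by (auto simp: strict_mono_on_def)
  then show False using t \<open>d (x/2) < 0\<close> by linarith
qed

lemma rate_smono:
  assumes "rate_fun d" "0 \<le> x" "x < y" shows "d x < d y"
proof (cases "x = 0")
  case True then show ?thesis using rate_pos[OF assms(1)] assms unfolding rate_fun_def by auto
next
  case False then show ?thesis using assms unfolding rate_fun_def strict_mono_on_def by auto
qed

lemma rate_nonneg: "rate_fun d \<Longrightarrow> 0 \<le> x \<Longrightarrow> 0 \<le> d x"
  using rate_pos[of d x] unfolding rate_fun_def by (cases "x = 0") auto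

lemma rate_inj: "rate_fun d \<Longrightarrow> inj_on d {0..}"
  by (metis (no_types, lifting) atLeast_iff inj_onI linorder_neq_iff rate_smono)

lemma rate_surj:
  assumes "rate_fun d" "0 \<le> R" "0 \<le> y" "y \<le> d R" shows "\<exists>x. 0\<le>x \<and> x\<le>R \<and> d x = y"
proof -
  have c: "continuous_on {0..R} d" using C1_cont assms(1) unfolding rate_fun_def
    by (meson atLeastAtMost_iff atLeast_iff continuous_on_subset subsetI)
  show ?thesis using IVT'[of d 0 y R] c assms unfolding rate_fun_def by auto
qed

lemma inv0_props:
  assumes "rate_fun d" "0 \<le> R" "0 \<le> y" "y \<le> d R"
  shows "0 \<le> inv0 d y \<and> inv0 d y \<le> R \<and> d (inv0 d y) = y"
proof -
  obtain x where x: "0\<le>x" "x\<le>R" "d x = y" using rate_surj[OF assms] by auto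
  have "inv0 d y = x" unfolding inv0_def using x rate_inj[OF assms(1)]
    by (metis atLeast_iff the_inv_into_f_f)
  then show ?thesis using x by auto
qed

lemma inv0_img:
  assumes "rate_fun d" "0 \<le> R" shows "d ` {0..R} = {0..d R}"
proof
  show "d ` {0..R} \<subseteq> {0..d R}"
  proof
    fix y assume "y \<in> d ` {0..R}"
    then obtain x where x: "0 \<le> x" "x \<le> R" "y = d x" by auto
    have "d x \<le> d R" using rate_smono[OF assms(1) x(1), of R] x(2) by (cases "x = R") auto
    then show "y \<in> {0..d R}" using rate_nonneg[OF assms(1) x(1)] x by auto
  qed
  show "{0..d R} \<subseteq> d ` {0..R}" using rate_surj[OF assms] by force
qed

lemma inv0_cont:
  assumes "rate_fun d" "0 \<le> R" shows "continuous_on {0..d R} (inv0 d)"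
proof -
  have c: "continuous_on {0..R} d" using C1_cont assms(1) unfolding rate_fun_def
    by (meson atLeastAtMost_iff atLeast_iff continuous_on_subset subsetI)
  have "continuous_on (d ` {0..R}) (inv0 d)"
    by (rule continuous_on_inv[OF c]) (use rate_inj[OF assms(1)] in \<open>auto simp: inv0_def intro!: the_inv_into_f_f\<close>)
  then show ?thesis using inv0_img[OF assms] by simp
qed

lemma inv0_mono:
  assumes "rate_fun d" "0 \<le> R" "0 \<le> y" "y \<le> z" "z \<le> d R"
  shows "inv0 d y \<le> inv0 d z"
proof (rule ccontr)
  assume "\<not> ?thesis"
  then have lt: "inv0 d z < inv0 d y" by simp
  have py: "d (inv0 d y) = y" using inv0_props[OF assms(1,2,3)] assms(4,5) by simp
  have pz: "0 \<le> inv0 d z" "d (inv0 d z) = z" using inv0_props[OF assms(1,2), of z] assms(3,4,5) by simp_all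
  have "d (inv0 d z) < d (inv0 d y)" by (rule rate_smono[OF assms(1) pz(1) lt])
  then show False using py pz(2) assms(4) by simp
qed

lemma lim_exceed:
  fixes d :: "real \<Rightarrow> real"
  assumes "((\<lambda>x. ereal (d x)) \<longlongrightarrow> \<delta>) at_top" "ereal y < \<delta>"
  shows "\<exists>R\<ge>0. d R > y"
proof -
  have "eventually (\<lambda>x. y < d x) at_top" using order_tendstoD(1)[OF assms] by simp
  then have "\<exists>N. \<forall>x\<ge>N. y < d x" by (rule eventually_at_top_linorder[THEN iffD1])
  then obtain N where N: "\<forall>x\<ge>N. y < d x" by blast
  have "y < d (max N 0)" using N by simp
  then show ?thesis by (intro exI[of _ "max N 0"]) simp
qed

lemma repr_props:
  assumes "repression_fun a" "0 \<le> p" shows "0 < a p \<and> a p \<le> a 0"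
proof -
  have "a (p+1) < a p" "a (p+1) \<ge> 0" using assms unfolding repression_fun_def by auto
  moreover have "a p \<le> a 0"
  proof (cases "p = 0")
    case False
    then have "a p < a 0" using assms unfolding repression_fun_def by auto
    then show ?thesis by simp
  qed simp
  ultimately show ?thesis by linarith
qed

lemma f_props:
  assumes ra: "repression_fun a" and rdr: "rate_fun dr" and rdp: "rate_fun dp" and rk: "rate_fun k"
    and lr: "((\<lambda>x. ereal (dr x)) \<longlongrightarrow> \<delta>R) at_top"
    and lp: "((\<lambda>x. ereal (dp x)) \<longlongrightarrow> \<delta>P) at_top"
    and gr: "\<delta>R > ereal (a 0)" and gp: "\<delta>P > ereal (k (inv0 dr (a 0)))"
  shows "\<exists>B. continuous_on {0..} (inv0 dp \<circ> k \<circ> inv0 dr \<circ> a) \<and>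
    (\<forall>p\<ge>0. 0 \<le> inv0 dr (a p) \<and> dr (inv0 dr (a p)) = a p \<and>
       dp ((inv0 dp \<circ> k \<circ> inv0 dr \<circ> a) p) = k (inv0 dr (a p)) \<and>
       0 < (inv0 dp \<circ> k \<circ> inv0 dr \<circ> a) p \<and> (inv0 dp \<circ> k \<circ> inv0 dr \<circ> a) p \<le> B)"
proof -
  obtain R where R: "R \<ge> 0" "dr R > a 0" using lim_exceed[OF lr gr] by auto
  define r0 where "r0 = inv0 dr (a 0)"
  obtain S where S: "S \<ge> 0" "dp S > k r0" using lim_exceed[OF lp gp] r0_def by auto
  have a0: "0 < a 0" using repr_props[OF ra, of 0] by simp
  have r0p: "0 \<le> r0" using inv0_props[OF rdr R(1), of "a 0"] a0 R r0_def by auto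
  have rp: "0 \<le> inv0 dr (a p) \<and> inv0 dr (a p) \<le> R \<and> dr (inv0 dr (a p)) = a p
      \<and> 0 < inv0 dr (a p) \<and> inv0 dr (a p) \<le> r0" if "p \<ge> 0" for p
  proof -
    have ap: "0 < a p" "a p \<le> a 0" using repr_props[OF ra that] by auto
    have h: "0 \<le> inv0 dr (a p) \<and> inv0 dr (a p) \<le> R \<and> dr (inv0 dr (a p)) = a p"
      using inv0_props[OF rdr R(1), of "a p"] ap R by auto
    moreover have "inv0 dr (a p) \<noteq> 0" using h ap rdr unfolding rate_fun_def by auto
    moreover have "inv0 dr (a p) \<le> r0" unfolding r0_def
      using inv0_mono[OF rdr R(1), of "a p" "a 0"] ap R by auto
    ultimately show ?thesis by auto
  qed
  have kp: "0 < k (inv0 dr (a p)) \<and> k (inv0 dr (a p)) \<le> k r0" if "p \<ge> 0" for p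
  proof -
    have "0 < k (inv0 dr (a p))" using rate_pos[OF rk] rp[OF that] by auto
    moreover have "k (inv0 dr (a p)) \<le> k r0"
      using rate_smono[OF rk, of "inv0 dr (a p)" r0] rp[OF that] by (cases "inv0 dr (a p) = r0") auto
    ultimately show ?thesis by auto
  qed
  have fp: "0 \<le> inv0 dp (k (inv0 dr (a p))) \<and> inv0 dp (k (inv0 dr (a p))) \<le> S
     \<and> dp (inv0 dp (k (inv0 dr (a p)))) = k (inv0 dr (a p)) \<and> 0 < inv0 dp (k (inv0 dr (a p)))"
    if "p \<ge> 0" for p
  proof -
    have h: "0 \<le> inv0 dp (k (inv0 dr (a p))) \<and> inv0 dp (k (inv0 dr (a p))) \<le> S
     \<and> dp (inv0 dp (k (inv0 dr (a p)))) = k (inv0 dr (a p))"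
      using inv0_props[OF rdp S(1), of "k (inv0 dr (a p))"] kp[OF that] S by auto
    moreover have "inv0 dp (k (inv0 dr (a p))) \<noteq> 0" using h kp[OF that] rdp unfolding rate_fun_def by auto
    ultimately show ?thesis by auto
  qed
  have c1: "continuous_on {0..} a" using ra C1_cont unfolding repression_fun_def by auto
  have c2: "continuous_on {0..dr R} (inv0 dr)" using inv0_cont[OF rdr R(1)] .
  have c3: "continuous_on {0..} k" using rk C1_cont unfolding rate_fun_def by auto
  have c4: "continuous_on {0..dp S} (inv0 dp)" using inv0_cont[OF rdp S(1)] .
  have i1: "a ` {0..} \<subseteq> {0..dr R}" using repr_props[OF ra] R by fastforce
  have cc1: "continuous_on {0..} (\<lambda>x. inv0 dr (a x))" by (rule continuous_on_compose2[OF c2 c1 i1])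
  have i2: "(\<lambda>x. inv0 dr (a x)) ` {0..} \<subseteq> {0..}" using rp by auto
  have cc2: "continuous_on {0..} (\<lambda>x. k (inv0 dr (a x)))" by (rule continuous_on_compose2[OF c3 cc1 i2])
  have i3: "(\<lambda>x. k (inv0 dr (a x))) ` {0..} \<subseteq> {0..dp S}" using kp S by fastforce
  have cc3: "continuous_on {0..} (\<lambda>x. inv0 dp (k (inv0 dr (a x))))"
    by (rule continuous_on_compose2[OF c4 cc2 i3])
  show ?thesis
    apply (rule exI[of _ S])
    using cc3 fp rp by (simp add: o_def)
qed

lemma cs_shift: "comp_steps f n (i+j) m (comp_steps f n i j x) = comp_steps f n i (j+m) x"
  by (induction m) (simp_all add: add.assoc)

lemma cs_period: "comp_steps f n (i+n) m x = comp_steps f n i m x"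
proof (induction m)
  case (Suc m)
  have "(i + n + Suc m) mod n = (i + Suc m) mod n"
    by (metis add.commute add.left_commute mod_add_self2)
  then show ?case using Suc by simp
qed simp

theorem proposition3:
  fixes n :: nat
    and a dr dp k :: "nat \<Rightarrow> real \<Rightarrow> real"
    and \<alpha> :: "nat \<Rightarrow> real"
    and \<delta>R \<delta>P :: "nat \<Rightarrow> ereal"
  assumes "n \<ge> 2" and "even n"
    and "\<And>i. i < n \<Longrightarrow> repression_fun (a i)"
    and "\<And>i. i < n \<Longrightarrow> rate_fun (dr i)"
    and "\<And>i. i < n \<Longrightarrow> rate_fun (dp i)"
    and "\<And>i. i < n \<Longrightarrow> rate_fun (k i)"
    and "\<And>i. i < n \<Longrightarrow> (a i \<longlongrightarrow> \<alpha> i) at_top"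
    and "\<And>i. i < n \<Longrightarrow> \<alpha> i > 0"
    and "\<And>i. i < n \<Longrightarrow> ((\<lambda>x. ereal (dr i x)) \<longlongrightarrow> \<delta>R i) at_top"
    and "\<And>i. i < n \<Longrightarrow> ((\<lambda>x. ereal (dp i x)) \<longlongrightarrow> \<delta>P i) at_top"
    and "\<And>i. i < n \<Longrightarrow> \<delta>R i > ereal (a i 0)"
    and "\<And>i. i < n \<Longrightarrow> \<delta>P i > ereal (k i (inv0 (dr i) (a i 0)))"
  shows "(\<forall>i<n. \<exists>x>0. cyc_comp (fmap a dr dp k) n i x = x) \<and>
         (\<exists>pstar :: nat \<Rightarrow> real.
            (\<forall>i<n. pstar i > 0 \<and> cyc_comp (fmap a dr dp k) n i (pstar i) = pstar i) \<and>
            steady_state n a dr dp k (\<lambda>i. inv0 (dr i) (a i (pstar (prev n i)))) pstar)"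
proof -
  define F where "F = fmap a dr dp k"
  have n0: "n > 0" using assms(1) by simp
  define P where "P = (\<lambda>i B. continuous_on {0..} (F i) \<and>
    (\<forall>p\<ge>0. 0 \<le> inv0 (dr i) (a i p) \<and> dr i (inv0 (dr i) (a i p)) = a i p \<and>
       dp i (F i p) = k i (inv0 (dr i) (a i p)) \<and> 0 < F i p \<and> F i p \<le> B))"
  have ex: "\<forall>i. \<exists>B. i < n \<longrightarrow> P i B"
  proof
    fix i show "\<exists>B. i < n \<longrightarrow> P i B"
    proof (cases "i < n")
      case True
      have "\<exists>B. P i B" unfolding P_def F_def fmap_def
        by (rule f_props[OF assms(3,4,5,6,9,10,11,12)[OF True]])
      then show ?thesis by blast
    qed simp
  qed
  obtain B where B0: "\<forall>i. i < n \<longrightarrow> P i (B i)" using choice[OF ex] by blast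
  have B: "continuous_on {0..} (F i) \<and>
    (\<forall>p\<ge>0. 0 \<le> inv0 (dr i) (a i p) \<and> dr i (inv0 (dr i) (a i p)) = a i p \<and>
       dp i (F i p) = k i (inv0 (dr i) (a i p)) \<and> 0 < F i p \<and> F i p \<le> B i)" if "i < n" for i
    using B0 that unfolding P_def by blast
  have Bc: "continuous_on {0..} (F i)" if "i < n" for i using B[OF that] by blast
  have Bp: "0 < F i p" if "i < n" "p \<ge> 0" for i p using B[OF that(1)] that(2) by blast
  have Bb: "F i p \<le> B i" if "i < n" "p \<ge> 0" for i p using B[OF that(1)] that(2) by blast
  have Bs1: "0 \<le> inv0 (dr i) (a i p)" if "i < n" "p \<ge> 0" for i p using B[OF that(1)] that(2) by blast
  have Bs2: "dr i (inv0 (dr i) (a i p)) = a i p" if "i < n" "p \<ge> 0" for i p using B[OF that(1)] that(2) by blast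
  have Bs3: "dp i (F i p) = k i (inv0 (dr i) (a i p))" if "i < n" "p \<ge> 0" for i p using B[OF that(1)] that(2) by blast
  have C: "continuous_on {0..} (comp_steps F n 0 m) \<and> (\<forall>x\<ge>0. comp_steps F n 0 m x \<ge> 0)" for m
  proof (induction m)
    case 0 then show ?case by (simp add: continuous_on_id)
  next
    case (Suc m)
    define j where "j = Suc m mod n"
    have j: "j < n" using n0 j_def by simp
    have e: "comp_steps F n 0 (Suc m) = (\<lambda>x. F j (comp_steps F n 0 m x))" by (simp add: j_def fun_eq_iff)
    have c2: "continuous_on {0..} (comp_steps F n 0 m)" using Suc by blast
    have c3: "comp_steps F n 0 m ` {0..} \<subseteq> {0..}" using Suc by auto
    have "continuous_on {0..} (\<lambda>x. F j (comp_steps F n 0 m x))"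
      by (rule continuous_on_compose2[OF Bc[OF j] c2 c3])
    moreover have "\<forall>x\<ge>0. F j (comp_steps F n 0 m x) \<ge> 0"
    proof (intro allI impI)
      fix x :: real assume "x \<ge> 0"
      then have "comp_steps F n 0 m x \<ge> 0" using Suc by blast
      then have "0 < F j (comp_steps F n 0 m x)" by (rule Bp[OF j])
      then show "F j (comp_steps F n 0 m x) \<ge> 0" by simp
    qed
    ultimately show ?case using e by simp
  qed
  have Cc: "continuous_on {0..} (comp_steps F n 0 m)" for m using C by blast
  have Cn: "x \<ge> 0 \<Longrightarrow> comp_steps F n 0 m x \<ge> 0" for m x using C by blast
  have g_eq: "cyc_comp F n 0 x = F 0 (comp_steps F n 0 (n - 1) x)" for x
  proof -
    have "n = Suc (n - 1)" using n0 by simp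
    then have "comp_steps F n 0 n x = F (n mod n) (comp_steps F n 0 (n - 1) x)"
      by (metis comp_steps.simps(2) add_0)
    then show ?thesis unfolding cyc_comp_def by simp
  qed
  have gpos: "0 < cyc_comp F n 0 x \<and> cyc_comp F n 0 x \<le> B 0" if "x \<ge> 0" for x
    unfolding g_eq using Bp[OF n0 Cn[OF that]] Bb[OF n0 Cn[OF that]] by blast
  have gc: "continuous_on {0..B 0} (\<lambda>x. cyc_comp F n 0 x - x)"
    unfolding cyc_comp_def
    by (intro continuous_intros continuous_on_subset[OF Cc]) auto
  have B0: "B 0 \<ge> 0" using gpos[of 0] by simp
  have h1: "cyc_comp F n 0 (B 0) - B 0 \<le> 0" using gpos[OF B0] by simp
  have h2: "0 \<le> cyc_comp F n 0 0 - 0" using gpos[of 0] by simp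
  obtain x0 where x0: "x0 \<ge> 0" "x0 \<le> B 0" "cyc_comp F n 0 x0 - x0 = 0"
    using IVT2'[of "\<lambda>x. cyc_comp F n 0 x - x", OF h1 h2 B0 gc] by blast
  have x0fix: "comp_steps F n 0 n x0 = x0" using x0 unfolding cyc_comp_def by simp
  have x0pos: "x0 > 0" using gpos[OF x0(1)] x0(3) by simp
  define ps where "ps = (\<lambda>j. comp_steps F n 0 j x0)"
  have pspos: "ps i > 0" for i
  proof (cases i)
    case 0 then show ?thesis using x0pos ps_def by simp
  next
    case (Suc m)
    have "Suc m mod n < n" using n0 by simp
    from Bp[OF this Cn[OF x0(1), of m]] show ?thesis using Suc ps_def by simp
  qed
  have psfix: "cyc_comp F n i (ps i) = ps i" for i
  proof -
    have "cyc_comp F n i (ps i) = comp_steps F n (0+i) n (comp_steps F n 0 i x0)"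
      unfolding cyc_comp_def ps_def by simp
    also have "\<dots> = comp_steps F n 0 (i+n) x0" by (rule cs_shift)
    also have "\<dots> = comp_steps F n 0 (n+i) x0" by (simp add: add.commute)
    also have "\<dots> = comp_steps F n (0+n) i (comp_steps F n 0 n x0)" by (rule cs_shift[symmetric])
    also have "\<dots> = comp_steps F n 0 i x0" using x0fix cs_period[of F n 0 i] by simp
    finally show ?thesis unfolding ps_def .
  qed
  have psrec: "ps i = F i (ps (prev n i))" if "i < n" for i
  proof (cases i)
    case 0
    have "prev n i = n - 1" unfolding prev_def using 0 n0 by simp
    then show ?thesis using 0 g_eq[of x0] x0fix unfolding ps_def cyc_comp_def by simp
  next
    case (Suc m)
    have "prev n i = m" unfolding prev_def using Suc that by simp
    then show ?thesis using Suc that unfolding ps_def by simp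
  qed
  have ss: "steady_state n a dr dp k (\<lambda>i. inv0 (dr i) (a i (ps (prev n i)))) ps"
    unfolding steady_state_def
  proof (intro allI impI)
    fix i assume i: "i < n"
    have q: "ps (prev n i) \<ge> 0" using pspos less_imp_le by blast
    show "0 \<le> inv0 (dr i) (a i (ps (prev n i))) \<and> 0 \<le> ps i \<and>
         a i (ps (prev n i)) - dr i (inv0 (dr i) (a i (ps (prev n i)))) = 0 \<and>
         k i (inv0 (dr i) (a i (ps (prev n i)))) - dp i (ps i) = 0"
      using Bs1[OF i q] Bs2[OF i q] Bs3[OF i q] psrec[OF i] pspos[of i] by simp
  qed
  have "\<exists>pstar :: nat \<Rightarrow> real.
            (\<forall>i<n. pstar i > 0 \<and> cyc_comp F n i (pstar i) = pstar i) \<and>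
            steady_state n a dr dp k (\<lambda>i. inv0 (dr i) (a i (pstar (prev n i)))) pstar"
    apply (rule exI[of _ ps]) using ss pspos psfix by simp
  moreover have "\<forall>i<n. \<exists>x>0. cyc_comp F n i x = x" using pspos psfix by blast
  ultimately have "(\<forall>i<n. \<exists>x>0. cyc_comp F n i x = x) \<and> (\<exists>pstar :: nat \<Rightarrow> real.
            (\<forall>i<n. pstar i > 0 \<and> cyc_comp F n i (pstar i) = pstar i) \<and>
            steady_state n a dr dp k (\<lambda>i. inv0 (dr i) (a i (pstar (prev n i)))) pstar)"
    by (rule conjI[rotated])
  then show ?thesis unfolding F_def .
qed

end
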